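(* Let $G$ be a graph with a type-2A 1-planar drawing $D$, and let $X$ and $Y$ be two distinct vertex subsets of $G$. Let $G'$ be the graph obtained from $G$ by removing every edge of $E_G(X,Y)$ that crosses (in $D$) some edge with both endvertices in $X$. If $D$ is nice, then $N_{G'}(X,Y)=N_G(X,Y)$.
   Context: All drawings are good (no edge crosses itself, two edges cross at most once, adjacent edges do not cross). A drawing is 1-planar if every edge is crossed at most once. If edges $ab$ and $cd$ cross in a 1-planar drawing of $G$, the associated edges of this crossing are the edges of $G[\{a,b,c,d\}]$ other than $ab$ and $cd$. A 1-planar drawing is type-2A if every crossing has at least two associated edges, and every crossing with exactly two associated edges has these two edges disjoint. A 1-planar drawing is nice if for every pair of crossing edges, all of their associated edges are uncrossed. For vertex sets $V_1,V_2$, $E_G(V_1,V_2)$ is the set of edges of $G$ with one endvertex in $V_1$ and the other in $V_2$, and $N_G(V_1,V_2)=\{v\in V_2: v \text{ is adjacent in } G \text{ to some vertex of } V_1\}$. *)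

theory Defs
  imports "HOL-Analysis.Analysis"
begin

definition simple_graph :: "'v set \<Rightarrow> 'v set set \<Rightarrow> bool" where
  "simple_graph V E \<longleftrightarrow> finite V \<and>
     (\<forall>e\<in>E. \<exists>a b. a \<noteq> b \<and> a \<in> V \<and> b \<in> V \<and> e = {a, b})"

definition drawing :: "'v set \<Rightarrow> 'v set set \<Rightarrow> ('v \<Rightarrow> complex) \<Rightarrow> ('v set \<Rightarrow> real \<Rightarrow> complex) \<Rightarrow> bool" where
  "drawing V E pos cv \<longleftrightarrow> inj_on pos V \<and>
     (\<forall>e\<in>E. arc (cv e) \<and> {pathstart (cv e), pathfinish (cv e)} = pos ` e \<and>
        (\<forall>v\<in>V. pos v \<in> path_image (cv e) \<longrightarrow> v \<in> e))"

definition edge_interior :: "('v \<Rightarrow> complex) \<Rightarrow> ('v set \<Rightarrow> real \<Rightarrow> complex) \<Rightarrow> 'v set \<Rightarrow> complex set" where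
  "edge_interior pos cv e = path_image (cv e) - pos ` e"

definition cross_points :: "('v \<Rightarrow> complex) \<Rightarrow> ('v set \<Rightarrow> real \<Rightarrow> complex) \<Rightarrow> 'v set \<Rightarrow> 'v set \<Rightarrow> complex set" where
  "cross_points pos cv e f = edge_interior pos cv e \<inter> edge_interior pos cv f"

definition crosses :: "('v \<Rightarrow> complex) \<Rightarrow> ('v set \<Rightarrow> real \<Rightarrow> complex) \<Rightarrow> 'v set \<Rightarrow> 'v set \<Rightarrow> bool" where
  "crosses pos cv e f \<longleftrightarrow> e \<noteq> f \<and> cross_points pos cv e f \<noteq> {}"

text \<open>Good drawing: no edge crosses itself (edges are arcs), two edges cross at most
  once, adjacent edges do not cross.\<close>
definition good_drawing :: "'v set \<Rightarrow> 'v set set \<Rightarrow> ('v \<Rightarrow> complex) \<Rightarrow> ('v set \<Rightarrow> real \<Rightarrow> complex) \<Rightarrow> bool" where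
  "good_drawing V E pos cv \<longleftrightarrow> drawing V E pos cv \<and>
     (\<forall>e\<in>E. \<forall>f\<in>E. e \<noteq> f \<longrightarrow>
        (\<forall>p q. p \<in> cross_points pos cv e f \<and> q \<in> cross_points pos cv e f \<longrightarrow> p = q) \<and>
        (e \<inter> f \<noteq> {} \<longrightarrow> \<not> crosses pos cv e f))"

definition one_planar :: "'v set \<Rightarrow> 'v set set \<Rightarrow> ('v \<Rightarrow> complex) \<Rightarrow> ('v set \<Rightarrow> real \<Rightarrow> complex) \<Rightarrow> bool" where
  "one_planar V E pos cv \<longleftrightarrow> good_drawing V E pos cv \<and>
     (\<forall>e\<in>E. \<forall>f\<in>E. \<forall>g\<in>E. crosses pos cv e f \<and> crosses pos cv e g \<longrightarrow> f = g)"

definition assoc_edges :: "'v set set \<Rightarrow> 'v set \<Rightarrow> 'v set \<Rightarrow> 'v set set" where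
  "assoc_edges E e f = {g \<in> E. g \<subseteq> e \<union> f} - {e, f}"

definition type_2A :: "'v set \<Rightarrow> 'v set set \<Rightarrow> ('v \<Rightarrow> complex) \<Rightarrow> ('v set \<Rightarrow> real \<Rightarrow> complex) \<Rightarrow> bool" where
  "type_2A V E pos cv \<longleftrightarrow> one_planar V E pos cv \<and>
     (\<forall>e\<in>E. \<forall>f\<in>E. crosses pos cv e f \<longrightarrow>
        card (assoc_edges E e f) \<ge> 2 \<and>
        (card (assoc_edges E e f) = 2 \<longrightarrow>
           (\<forall>g\<in>assoc_edges E e f. \<forall>h\<in>assoc_edges E e f. g \<noteq> h \<longrightarrow> g \<inter> h = {})))"

definition nice :: "'v set \<Rightarrow> 'v set set \<Rightarrow> ('v \<Rightarrow> complex) \<Rightarrow> ('v set \<Rightarrow> real \<Rightarrow> complex) \<Rightarrow> bool" where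
  "nice V E pos cv \<longleftrightarrow> one_planar V E pos cv \<and>
     (\<forall>e\<in>E. \<forall>f\<in>E. crosses pos cv e f \<longrightarrow>
        (\<forall>g\<in>assoc_edges E e f. \<forall>h\<in>E. \<not> crosses pos cv g h))"

definition edges_between :: "'v set set \<Rightarrow> 'v set \<Rightarrow> 'v set \<Rightarrow> 'v set set" where
  "edges_between E V1 V2 = {e \<in> E. \<exists>a b. e = {a, b} \<and> a \<in> V1 \<and> b \<in> V2}"

definition nbhd :: "'v set set \<Rightarrow> 'v set \<Rightarrow> 'v set \<Rightarrow> 'v set" where
  "nbhd E V1 V2 = {v \<in> V2. \<exists>u \<in> V1. {u, v} \<in> E}"

end

theory Submission
  imports Defs
begin

theorem lemma9:
  fixes V :: "'v set" and E :: "'v set set"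
    and pos :: "'v \<Rightarrow> complex" and cv :: "'v set \<Rightarrow> real \<Rightarrow> complex"
    and X Y :: "'v set"
  assumes "simple_graph V E"
    and "type_2A V E pos cv"
    and "X \<subseteq> V" and "Y \<subseteq> V" and "X \<noteq> Y"
    and "nice V E pos cv"
  shows "nbhd (E - {e \<in> edges_between E X Y. \<exists>f\<in>E. f \<subseteq> X \<and> crosses pos cv e f}) X Y
         = nbhd E X Y"
proof
  let ?R = "{e \<in> edges_between E X Y. \<exists>f\<in>E. f \<subseteq> X \<and> crosses pos cv e f}"
  show "nbhd (E - ?R) X Y \<subseteq> nbhd E X Y" unfolding nbhd_def by blast
  show "nbhd E X Y \<subseteq> nbhd (E - ?R) X Y"
  proof
    fix v assume "v \<in> nbhd E X Y"
    then obtain u where v: "v \<in> Y" and u: "u \<in> X" and uv: "{u,v} \<in> E"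
      unfolding nbhd_def by blast
    show "v \<in> nbhd (E - ?R) X Y"
    proof (cases "{u,v} \<in> ?R")
      case False
      then show ?thesis using v u uv unfolding nbhd_def by blast
    next
      case True
      then obtain f where f: "f \<in> E" "f \<subseteq> X" and cr: "crosses pos cv {u,v} f" by blast
      from assms(1) f obtain a b where ab: "a \<noteq> b" "f = {a,b}" unfolding simple_graph_def by blast
      have aX: "a \<in> X" "b \<in> X" using ab f by auto
      have gd: "good_drawing V E pos cv" using assms(2) unfolding type_2A_def one_planar_def by blast
      have neq0: "{u,v} \<noteq> f" using cr unfolding crosses_def by blast
      have gd2: "\<forall>e\<in>E. \<forall>f\<in>E. e \<noteq> f \<longrightarrow> (e \<inter> f \<noteq> {} \<longrightarrow> \<not> crosses pos cv e f)"
        using gd unfolding good_drawing_def by blast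
      have "{u,v} \<inter> f \<noteq> {} \<longrightarrow> \<not> crosses pos cv {u,v} f"
        using gd2 uv f(1) neq0 by simp
      hence disj: "{u,v} \<inter> f = {}" using cr by simp
      have nc: "\<And>g h. g \<in> assoc_edges E {u,v} f \<Longrightarrow> h \<in> E \<Longrightarrow> \<not> crosses pos cv g h"
        using assms(6) uv f cr unfolding nice_def by blast
      have t2: "card (assoc_edges E {u,v} f) \<ge> 2 \<and>
        (card (assoc_edges E {u,v} f) = 2 \<longrightarrow>
           (\<forall>g\<in>assoc_edges E {u,v} f. \<forall>h\<in>assoc_edges E {u,v} f. g \<noteq> h \<longrightarrow> g \<inter> h = {}))"
        using assms(2) uv f cr unfolding type_2A_def by blast
      have "\<exists>w\<in>{a,b}. {w,v} \<in> E"
      proof (rule ccontr)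
        assume nv: "\<not> (\<exists>w\<in>{a,b}. {w,v} \<in> E)"
        have sub: "assoc_edges E {u,v} f \<subseteq> {{u,a},{u,b}}"
        proof
          fix g assume g: "g \<in> assoc_edges E {u,v} f"
          hence gE: "g \<in> E" and gs: "g \<subseteq> {u,v,a,b}" and gn: "g \<noteq> {u,v}" "g \<noteq> {a,b}"
            unfolding assoc_edges_def using ab by auto
          from assms(1) gE obtain x y where xy: "x \<noteq> y" "g = {x,y}" unfolding simple_graph_def by blast
          have vg: "v \<notin> g"
          proof
            assume "v \<in> g"
            then consider "x = v" | "y = v" using xy by blast
            then show False
            proof cases
              case 1
              hence "y \<in> {u,a,b}" using xy gs by auto
              thus False using 1 xy gn nv gE by (auto simp: insert_commute)
            next
              case 2
              hence "x \<in> {u,a,b}" using xy gs by auto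
              thus False using 2 xy gn nv gE by auto
            qed
          qed
          have xs: "x \<in> {u,a,b}" "y \<in> {u,a,b}" using vg xy gs by auto
          show "g \<in> {{u,a},{u,b}}"
            using xs xy gn by (auto simp: insert_commute)
        qed
        have fin: "finite {{u,a},{u,b}}" by simp
        have c2: "card {{u,a},{u,b}} \<le> 2" by (simp add: card_insert_le_m1)
        have eq: "assoc_edges E {u,v} f = {{u,a},{u,b}}"
        proof (rule card_seteq[OF fin sub])
          show "card {{u,a},{u,b}} \<le> card (assoc_edges E {u,v} f)" using c2 t2 by linarith
        qed
        have neq: "{u,a} \<noteq> {u,b}" using ab disj by (auto simp: doubleton_eq_iff)
        hence "card (assoc_edges E {u,v} f) = 2" using eq by simp
        with t2 eq neq show False by auto
      qed
      then obtain w where w: "w \<in> {a,b}" "{w,v} \<in> E" by blast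
      have "{w,v} \<in> assoc_edges E {u,v} f"
        unfolding assoc_edges_def using w ab disj by auto
      hence "{w,v} \<notin> ?R" using nc f by blast
      moreover have "w \<in> X" using w aX by auto
      ultimately show ?thesis using w v unfolding nbhd_def by blast
    qed
  qed
qed

end
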